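(* Let $X$ solve $dX_t=\mu_X(X_t;\theta)\,dt+\sigma_X(X_t;\theta)\,dW_t$ on $\mathcal{X}=(x_l,x_r)$ and let $Y_t=V(X_t)$, with structure $\mathcal{S}=(\theta,V)$ ($\theta$ the data-generating parameter). Assume: (a) $\mu_X(\cdot;\theta)$ and $\sigma_X^2(\cdot;\theta)>0$ are twice continuously differentiable; (b) the scale measure satisfies $S(x;\theta)\to-\infty$ as $x\to x_l$ and $S(x;\theta)\to+\infty$ as $x\to x_r$; (c) $V$ is strictly increasing and twice continuously differentiable with inverse $U=V^{-1}$; (d) the drift $\mu_Y$ and diffusion $\sigma_Y^2$ of $Y$ are nonparametrically identified from the discretely sampled process $\{Y_{i\Delta}\}$. Define, on $\bar{\mathcal{X}}=S(\mathcal{X};\theta)$, $$\sigma_{\bar X}^2(\bar x;\vartheta)=s^2(S^{-1}(\bar x;\vartheta);\vartheta)\,\sigma_X^2(S^{-1}(\bar x;\vartheta);\vartheta).$$ Then $\mathcal{S}$ is identified if and only if the following holds: there exist no $\eta_1\neq1$, $\eta_2\neq0$ and $\tilde\theta\neq\theta$ such that $\sigma_{\bar X}^2(\bar x;\tilde\theta)=\sigma_{\bar X}^2(\eta_1\bar x+\eta_2;\theta)/\eta_1^2$ for all $\bar x\in\bar{\mathcal{X}}$.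
   Context: Scale density and scale measure: $s(x;\theta)=\exp\{-\int_{x^*}^x \frac{2\mu_X(z;\theta)}{\sigma_X^2(z;\theta)}dz\}$ and $S(x;\theta)=\int_{x^*}^x s(z;\theta)dz$ for some fixed $x^*\in\mathcal{X}$. For a structure $\mathcal{S}=(\theta,V)$ with $U=V^{-1}$, the drift and diffusion of $Y$ are $\mu_Y(y;\mathcal{S})=\frac{\mu_X(U(y);\theta)}{U'(y)}-\frac12\sigma_X^2(U(y);\theta)\frac{U''(y)}{U'(y)^3}$ and $\sigma_Y(y;\mathcal{S})=\frac{\sigma_X(U(y);\theta)}{U'(y)}$. Two structures are observationally equivalent ($\mathcal{S}\sim\tilde{\mathcal{S}}$) if they yield identical $\mu_Y(\cdot)$ and $\sigma_Y(\cdot)$ on the domain of $Y$. $\mathcal{S}$ is identified (within the model of admissible structures) if $\mathcal{S}\sim\tilde{\mathcal{S}}$ implies $\mathcal{S}=\tilde{\mathcal{S}}$. *)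

theory Defs
  imports "HOL-Analysis.Analysis"
begin

definition oint :: "(real \<Rightarrow> real) \<Rightarrow> real \<Rightarrow> real \<Rightarrow> real" where
  "oint f a b = (if a \<le> b then integral {a..b} f else - integral {b..a} f)"

definition C2_on :: "real set \<Rightarrow> (real \<Rightarrow> real) \<Rightarrow> bool" where
  "C2_on A f \<longleftrightarrow> (\<forall>x\<in>A. f field_differentiable (at x))
     \<and> (\<forall>x\<in>A. deriv f field_differentiable (at x))
     \<and> continuous_on A (deriv (deriv f))"

definition scale_density ::
  "(real \<Rightarrow> 'p \<Rightarrow> real) \<Rightarrow> (real \<Rightarrow> 'p \<Rightarrow> real) \<Rightarrow> real \<Rightarrow> 'p \<Rightarrow> real \<Rightarrow> real" where
  "scale_density mu sigma2 xstar th x =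
     exp (- oint (\<lambda>z. 2 * mu z th / sigma2 z th) xstar x)"

definition scale_measure ::
  "(real \<Rightarrow> 'p \<Rightarrow> real) \<Rightarrow> (real \<Rightarrow> 'p \<Rightarrow> real) \<Rightarrow> real \<Rightarrow> 'p \<Rightarrow> real \<Rightarrow> real" where
  "scale_measure mu sigma2 xstar th x = oint (scale_density mu sigma2 xstar th) xstar x"

definition sigma2_bar ::
  "(real \<Rightarrow> 'p \<Rightarrow> real) \<Rightarrow> (real \<Rightarrow> 'p \<Rightarrow> real) \<Rightarrow> real set \<Rightarrow> real \<Rightarrow> 'p \<Rightarrow> real \<Rightarrow> real" where
  "sigma2_bar mu sigma2 X xstar th xb =
     (let x = inv_into X (scale_measure mu sigma2 xstar th) xb
      in (scale_density mu sigma2 xstar th x)\<^sup>2 * sigma2 x th)"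

definition left_end :: "ereal \<Rightarrow> real filter" where
  "left_end xl = (if xl = -\<infinity> then at_bot else at_right (real_of_ereal xl))"

definition right_end :: "ereal \<Rightarrow> real filter" where
  "right_end xr = (if xr = \<infinity> then at_top else at_left (real_of_ereal xr))"

text \<open>Admissible transformations V: strictly increasing, C2, with V' > 0
  (so that U = V^{-1} has U' finite and nonzero, as the formulas for mu_Y need).\<close>
definition admissible_V :: "real set \<Rightarrow> (real \<Rightarrow> real) \<Rightarrow> bool" where
  "admissible_V X V \<longleftrightarrow> strict_mono_on X V \<and> C2_on X V \<and> (\<forall>x\<in>X. deriv V x > 0)"

definition mu_Y ::
  "(real \<Rightarrow> 'p \<Rightarrow> real) \<Rightarrow> (real \<Rightarrow> 'p \<Rightarrow> real) \<Rightarrow> real set \<Rightarrow> 'p \<Rightarrow> (real \<Rightarrow> real) \<Rightarrow> real \<Rightarrow> real" where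
  "mu_Y mu sigma2 X th V y =
     (let U = inv_into X V
      in mu (U y) th / deriv U y
         - 1/2 * sigma2 (U y) th * deriv (deriv U) y / (deriv U y) ^ 3)"

definition sigma2_Y ::
  "(real \<Rightarrow> 'p \<Rightarrow> real) \<Rightarrow> real set \<Rightarrow> 'p \<Rightarrow> (real \<Rightarrow> real) \<Rightarrow> real \<Rightarrow> real" where
  "sigma2_Y sigma2 X th V y =
     (let U = inv_into X V in sigma2 (U y) th / (deriv U y)\<^sup>2)"

definition obs_equiv ::
  "(real \<Rightarrow> 'p \<Rightarrow> real) \<Rightarrow> (real \<Rightarrow> 'p \<Rightarrow> real) \<Rightarrow> real set
   \<Rightarrow> 'p \<times> (real \<Rightarrow> real) \<Rightarrow> 'p \<times> (real \<Rightarrow> real) \<Rightarrow> bool" where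
  "obs_equiv mu sigma2 X S S' \<longleftrightarrow>
     (case S of (th, V) \<Rightarrow> case S' of (th', V') \<Rightarrow>
       V ` X = V' ` X \<and>
       (\<forall>y\<in>V ` X. mu_Y mu sigma2 X th V y = mu_Y mu sigma2 X th' V' y
                 \<and> sigma2_Y sigma2 X th V y = sigma2_Y sigma2 X th' V' y))"

definition identified ::
  "(real \<Rightarrow> 'p \<Rightarrow> real) \<Rightarrow> (real \<Rightarrow> 'p \<Rightarrow> real) \<Rightarrow> 'p set \<Rightarrow> real set
   \<Rightarrow> 'p \<times> (real \<Rightarrow> real) \<Rightarrow> bool" where
  "identified mu sigma2 Theta X S \<longleftrightarrow>
     (\<forall>th' V'. th' \<in> Theta \<and> admissible_V X V' \<and> obs_equiv mu sigma2 X S (th', V')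
        \<longrightarrow> th' = fst S \<and> (\<forall>x\<in>X. V' x = snd S x))"

end

theory Submission
  imports Defs
begin


lemma ivl_sub: "is_interval (A::real set) \<Longrightarrow> a \<in> A \<Longrightarrow> b \<in> A \<Longrightarrow> {a..b} \<subseteq> A"
  unfolding is_interval_1 by (metis atLeastAtMost_iff subsetI)

lemma pos_deriv_strict_mono:
  fixes f :: "real \<Rightarrow> real"
  assumes "is_interval A" "\<And>x. x \<in> A \<Longrightarrow> DERIV f x :> f' x" "\<And>x. x \<in> A \<Longrightarrow> f' x > 0"
  shows "strict_mono_on A f"
proof (rule strict_mono_onI)
  fix r s assume rs: "r \<in> A" "s \<in> A" "r < s"
  have sub: "{r..s} \<subseteq> A" using ivl_sub[OF assms(1) rs(1,2)] .
  have H: "\<exists>y. DERIV f x :> y \<and> y > 0" if "r \<le> x" "x \<le> s" for x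
  proof -
    have "x \<in> A" using sub that by auto
    then show ?thesis using assms(2)[of x] assms(3)[of x] by blast
  qed
  show "f r < f s" by (rule DERIV_pos_imp_increasing[OF rs(3) H])
qed

lemma ftc_oint:
  fixes f :: "real \<Rightarrow> real"
  assumes A: "open A" "is_interval A" and a: "a \<in> A" and cf: "continuous_on A f" and x: "x \<in> A"
  shows "((\<lambda>u. oint f a u) has_real_derivative f x) (at x)"
proof -
  obtain e where e: "e > 0" "ball x e \<subseteq> A" using A(1) x open_contains_ball by blast
  define lo where "lo = min a (x - e/2)"
  define hi where "hi = max a (x + e/2)"
  have lo: "lo \<in> A" using e a by (auto simp: lo_def min_def dist_real_def)
  have hi: "hi \<in> A" using e a by (auto simp: hi_def max_def dist_real_def)
  have sub: "{lo..hi} \<subseteq> A" using ivl_sub[OF A(2) lo hi] .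
  have cont: "continuous_on {lo..hi} f" using continuous_on_subset[OF cf sub] .
  have xin: "lo < x" "x < hi" using e by (auto simp: lo_def hi_def)
  have alo: "lo \<le> a" "a \<le> hi" by (auto simp: lo_def hi_def)
  have int: "\<And>c d. lo \<le> c \<Longrightarrow> d \<le> hi \<Longrightarrow> f integrable_on {c..d}"
    by (rule integrable_continuous_real, rule continuous_on_subset[OF cont]) auto
  have eq: "oint f a u = integral {lo..u} f - integral {lo..a} f" if u: "u \<in> {lo<..<hi}" for u
  proof (cases "a \<le> u")
    case True
    have "integral {lo..a} f + integral {a..u} f = integral {lo..u} f"
      by (rule Henstock_Kurzweil_Integration.integral_combine) (use True alo u int in auto)
    then show ?thesis using True by (simp add: oint_def)
  next
    case False
    have "integral {lo..u} f + integral {u..a} f = integral {lo..a} f"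
      by (rule Henstock_Kurzweil_Integration.integral_combine) (use False alo u int in auto)
    then show ?thesis using False by (simp add: oint_def)
  qed
  have "((\<lambda>u. integral {lo..u} f - integral {lo..a} f) has_real_derivative f x) (at x within {lo..hi})"
    using integral_has_real_derivative[OF cont, of x] xin
    by (auto intro!: derivative_eq_intros)
  then have "((\<lambda>u. integral {lo..u} f - integral {lo..a} f) has_real_derivative f x) (at x)"
    using at_within_Icc_at[OF xin] by simp
  then show ?thesis
    by (rule has_field_derivative_transform_within_open[where S="{lo<..<hi}"]) (use xin eq in auto)
qed

lemma inverse_props:
  fixes f :: "real \<Rightarrow> real"
  assumes A: "open A" "is_interval A"
    and d: "\<And>x. x \<in> A \<Longrightarrow> DERIV f x :> f' x" "\<And>x. x \<in> A \<Longrightarrow> f' x > 0"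
  shows "open (f ` A)" "is_interval (f ` A)" "inj_on f A"
    "\<And>y. y \<in> f ` A \<Longrightarrow> inv_into A f y \<in> A"
    "\<And>y. y \<in> f ` A \<Longrightarrow> f (inv_into A f y) = y"
    "\<And>x. x \<in> A \<Longrightarrow> inv_into A f (f x) = x"
    "\<And>y. y \<in> f ` A \<Longrightarrow> DERIV (inv_into A f) y :> 1 / f' (inv_into A f y)"
proof -
  have sm: "strict_mono_on A f" by (rule pos_deriv_strict_mono[OF A(2) d])
  show inj: "inj_on f A" using sm strict_mono_on_imp_inj_on by blast
  have cf: "continuous_on A f"
    using d(1) by (meson DERIV_continuous continuous_at_imp_continuous_on)
  have ivt: "y \<in> f ` A" if T: "r \<in> A" "s \<in> A" "r \<le> s" "f r \<le> y" "y \<le> f s" for r s y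
  proof -
    have sub: "{r..s} \<subseteq> A" using ivl_sub[OF A(2) T(1,2)] .
    obtain z where "r \<le> z" "z \<le> s" "f z = y"
      using IVT'[OF T(4,5,3) continuous_on_subset[OF cf sub]] by blast
    then show ?thesis using sub by force
  qed
  show "is_interval (f ` A)"
    unfolding is_interval_1
  proof (intro ballI allI impI)
    fix a b z assume ab: "a \<in> f ` A" "b \<in> f ` A" "a \<le> z \<and> z \<le> b"
    then obtain r s where rs: "r \<in> A" "s \<in> A" "a = f r" "b = f s" by auto
    have "r \<le> s"
    proof (rule ccontr)
      assume "\<not> r \<le> s"
      then have "f s < f r" using sm rs by (simp add: strict_mono_on_def)
      then show False using ab rs by simp
    qed
    then show "z \<in> f ` A" using ivt[OF rs(1,2)] ab rs by auto
  qed
  have nb: "\<exists>dd>0. cball x dd \<subseteq> A" if "x \<in> A" for x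
    using A(1) that open_contains_cball by blast
  show "open (f ` A)"
    unfolding open_dist
  proof (intro ballI)
    fix y assume "y \<in> f ` A"
    then obtain x where x: "x \<in> A" "y = f x" by auto
    obtain dd where dd: "dd > 0" "cball x dd \<subseteq> A" using nb[OF x(1)] by blast
    have m: "x - dd \<in> A" "x + dd \<in> A" using dd by (auto simp: dist_real_def)
    have l: "f (x - dd) < y" "y < f (x + dd)" using sm m x dd by (auto simp: strict_mono_on_def)
    show "\<exists>e>0. \<forall>z. dist z y < e \<longrightarrow> z \<in> f ` A"
    proof (intro exI[of _ "min (y - f (x - dd)) (f (x + dd) - y)"] conjI allI impI)
      show "0 < min (y - f (x - dd)) (f (x + dd) - y)" using l by simp
      fix z assume "dist z y < min (y - f (x - dd)) (f (x + dd) - y)"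
      then have "f (x - dd) \<le> z" "z \<le> f (x + dd)" by (auto simp: dist_real_def)
      then show "z \<in> f ` A" using ivt[OF m] dd by auto
    qed
  qed
  show inA: "\<And>y. y \<in> f ` A \<Longrightarrow> inv_into A f y \<in> A" by (simp add: inv_into_into)
  show fi: "\<And>y. y \<in> f ` A \<Longrightarrow> f (inv_into A f y) = y" by (simp add: f_inv_into_f)
  show "\<And>x. x \<in> A \<Longrightarrow> inv_into A f (f x) = x" using inj by simp
  show "DERIV (inv_into A f) y :> 1 / f' (inv_into A f y)" if y: "y \<in> f ` A" for y
  proof -
    let ?g = "inv_into A f"
    obtain x where x: "x \<in> A" "y = f x" using y by auto
    have gx: "?g y = x" using inj x by simp
    obtain dd where dd: "dd > 0" "cball x dd \<subseteq> A" using nb[OF x(1)] by blast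
    have "isCont ?g (f x)"
    proof (rule isCont_inverse_function[where f=f and g="inv_into A f" and x=x, OF dd(1)])
      fix z assume "\<bar>z - x\<bar> \<le> dd"
      then have "z \<in> A" using dd by (auto simp: dist_real_def)
      then show "?g (f z) = z" using inj by auto
    next
      fix z assume "\<bar>z - x\<bar> \<le> dd"
      then have "z \<in> A" using dd by (auto simp: dist_real_def)
      then show "isCont f z" using d(1) DERIV_isCont by auto
    qed
    have op: "open (f ` A)" by fact
    obtain e where e: "e > 0" "ball y e \<subseteq> f ` A" using op y open_contains_ball by blast
    have c1: "DERIV f (?g y) :> f' (?g y)" using d(1) gx x by simp
    have c2: "f' (?g y) \<noteq> 0" using d(2) gx x by (metis less_irrefl)
    have c3: "y - e < y" "y < y + e" using e by auto
    have c4: "f (?g z) = z" if "y - e < z" "z < y + e" for z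
    proof -
      have "z \<in> f ` A" using e that by (auto simp: dist_real_def subset_iff)
      then show ?thesis by (rule fi)
    qed
    have c5: "isCont ?g y" using \<open>isCont ?g (f x)\<close> x by simp
    have "DERIV ?g y :> inverse (f' (?g y))"
      by (rule DERIV_inverse_function[OF c1 c2 c3 c4 c5])
    then show ?thesis by (simp add: inverse_eq_divide)
  qed
qed


lemma deriv_eqI: "DERIV f x :> D \<Longrightarrow> D = E \<Longrightarrow> DERIV f x :> E" by simp

definition qf :: "(real \<Rightarrow> 'p \<Rightarrow> real) \<Rightarrow> (real \<Rightarrow> 'p \<Rightarrow> real) \<Rightarrow> 'p \<Rightarrow> real \<Rightarrow> real" where
  "qf mu sigma2 t x = 2 * mu x t / sigma2 x t"

lemma C2_facts:
  assumes "C2_on A f" "x \<in> A"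
  shows "DERIV f x :> deriv f x" "DERIV (deriv f) x :> deriv (deriv f) x" "isCont f x"
  using assms unfolding C2_on_def
  by (auto simp: DERIV_deriv_iff_field_differentiable field_differentiable_imp_continuous_at)

lemma C2_cont: "C2_on A f \<Longrightarrow> continuous_on A f"
  using C2_facts(3) continuous_at_imp_continuous_on by blast

lemma alg1:
  fixes m sg sv ud udd :: real
  assumes "sg \<noteq> 0" "sv \<noteq> 0" "ud \<noteq> 0"
  shows "m / ud - 1/2 * sg * udd / ud^3 = - 1/2 * (sg / ud^2) * (- (2 * m / sg) * sv * ud^2 + sv * udd) / (sv * ud)"
  using assms by (simp add: field_simps power2_eq_square power3_eq_cube)


lemma ereal_btw: "a \<le> x \<Longrightarrow> x \<le> b \<Longrightarrow> xl < ereal a \<Longrightarrow> ereal b < xr \<Longrightarrow> xl < ereal x \<and> ereal x < xr"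
proof -
  assume h: "a \<le> x" "x \<le> b" "xl < ereal a" "ereal b < xr"
  have "ereal a \<le> ereal x" "ereal x \<le> ereal b" using h by auto
  then show ?thesis using h by (meson order_less_le_trans order_le_less_trans)
qed

lemma left_ev:
  assumes "xl < ereal xs"
  shows "eventually (\<lambda>x. xl < ereal x \<and> x < xs) (left_end xl)" "left_end xl \<noteq> bot"
proof -
  show "eventually (\<lambda>x. xl < ereal x \<and> x < xs) (left_end xl)"
  proof (cases "xl = -\<infinity>")
    case True
    then show ?thesis by (auto simp: left_end_def eventually_at_bot_dense)
  next
    case False
    then obtain r where r: "xl = ereal r" using assms by (cases xl) auto
    have "r < xs" using assms r by simp
    then have "eventually (\<lambda>x. x \<in> {r<..<xs}) (at_right r)" by (rule eventually_at_right_real)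
    then show ?thesis using False r
      by (auto simp: left_end_def elim!: eventually_mono)
  qed
  show "left_end xl \<noteq> bot" by (auto simp: left_end_def)
qed

lemma right_ev:
  assumes "ereal xs < xr"
  shows "eventually (\<lambda>x. ereal x < xr \<and> xs < x) (right_end xr)" "right_end xr \<noteq> bot"
proof -
  show "eventually (\<lambda>x. ereal x < xr \<and> xs < x) (right_end xr)"
  proof (cases "xr = \<infinity>")
    case True
    then show ?thesis by (auto simp: right_end_def eventually_at_top_dense)
  next
    case False
    then obtain r where r: "xr = ereal r" using assms by (cases xr) auto
    have "xs < r" using assms r by simp
    then have "eventually (\<lambda>x. x \<in> {xs<..<r}) (at_left r)" by (rule eventually_at_left_real)
    then show ?thesis using False r
      by (auto simp: right_end_def elim!: eventually_mono)
  qed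
  show "right_end xr \<noteq> bot" by (auto simp: right_end_def)
qed

lemma surj_gen:
  fixes f :: "real \<Rightarrow> real"
  assumes X_def: "X = {x. xl < ereal x \<and> ereal x < xr}" and xs: "xstar \<in> X"
    and cf: "continuous_on X f"
    and l: "filterlim f at_bot (left_end xl)" and r: "filterlim f at_top (right_end xr)"
  shows "f ` X = UNIV"
proof -
  have ivl: "is_interval X" unfolding X_def is_interval_1
    using ereal_btw by blast
  have xs1: "xl < ereal xstar" "ereal xstar < xr" using xs X_def by auto
  have "y \<in> f ` X" for y
  proof -
    have "eventually (\<lambda>x. f x \<le> y) (left_end xl)" using l by (simp add: filterlim_at_bot)
    then have "eventually (\<lambda>x. (xl < ereal x \<and> x < xstar) \<and> f x \<le> y) (left_end xl)"
      by (intro eventually_conj[OF left_ev(1)[OF xs1(1)]])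
    then obtain x1 where x1: "xl < ereal x1" "x1 < xstar" "f x1 \<le> y"
      using left_ev(2)[OF xs1(1)] eventually_happens' by blast
    have "eventually (\<lambda>x. y \<le> f x) (right_end xr)" using r by (simp add: filterlim_at_top)
    then have "eventually (\<lambda>x. (ereal x < xr \<and> xstar < x) \<and> y \<le> f x) (right_end xr)"
      by (intro eventually_conj[OF right_ev(1)[OF xs1(2)]])
    then obtain x2 where x2: "ereal x2 < xr" "xstar < x2" "y \<le> f x2"
      using right_ev(2)[OF xs1(2)] eventually_happens' by blast
    have x1X: "x1 \<in> X" using ereal_btw[of x1 x1 xstar xl xr] x1 xs1 X_def by auto
    have x2X: "x2 \<in> X" using ereal_btw[of xstar x2 x2 xl xr] x2 xs1 X_def by auto
    have sub: "{x1..x2} \<subseteq> X" by (rule ivl_sub[OF ivl x1X x2X])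
    obtain z where "x1 \<le> z" "z \<le> x2" "f z = y"
      using IVT'[OF x1(3) x2(3) _ continuous_on_subset[OF cf sub]] x1 x2 by fastforce
    then show ?thesis using sub by force
  qed
  then show ?thesis by auto
qed

lemma X_props:
  assumes X_def: "X = {x. xl < ereal x \<and> ereal x < xr}"
  shows "open X" "is_interval X"
proof -
  show "is_interval X" unfolding X_def is_interval_1
    using ereal_btw by blast
  have "open {x. xl < ereal x}" by (intro open_Collect_less continuous_intros)
  moreover have "open {x. ereal x < xr}" by (intro open_Collect_less continuous_intros)
  ultimately have "open ({x. xl < ereal x} \<inter> {x. ereal x < xr})" by auto
  then show "open X" unfolding X_def by (simp add: Collect_conj_eq)
qed


locale dm0 =
  fixes mu sigma2 :: "real \<Rightarrow> 'p \<Rightarrow> real" and Theta :: "'p set" and X :: "real set" and xstar :: real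
  assumes X_open: "open X" and X_ivl: "is_interval X" and xstar: "xstar \<in> X"
   and a: "\<forall>t\<in>Theta. C2_on X (\<lambda>x. mu x t) \<and> C2_on X (\<lambda>x. sigma2 x t) \<and> (\<forall>x\<in>X. sigma2 x t > 0)"
begin

abbreviation "q t \<equiv> qf mu sigma2 t"
abbreviation "s t \<equiv> scale_density mu sigma2 xstar t"
abbreviation "S t \<equiv> scale_measure mu sigma2 xstar t"
abbreviation "R t \<equiv> inv_into X (S t)"

lemma sig_pos: "t \<in> Theta \<Longrightarrow> x \<in> X \<Longrightarrow> sigma2 x t > 0" using a by auto

lemma q_cont: assumes "t \<in> Theta" shows "continuous_on X (q t)"
proof -
  have "continuous_on X (\<lambda>x. mu x t)" "continuous_on X (\<lambda>x. sigma2 x t)"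
    using a assms C2_cont by auto
  then show ?thesis unfolding qf_def
    by (intro continuous_intros) (use sig_pos assms in force)+
qed

lemma s_deriv: assumes "t \<in> Theta" "x \<in> X" shows "DERIV (s t) x :> - q t x * s t x"
proof -
  have eq: "(\<lambda>z. 2 * mu z t / sigma2 z t) = q t" by (auto simp: qf_def)
  have "((\<lambda>u. oint (q t) xstar u) has_real_derivative q t x) (at x)"
    by (rule ftc_oint[OF X_open X_ivl xstar q_cont[OF assms(1)] assms(2)])
  then have "((\<lambda>u. exp (- oint (q t) xstar u)) has_real_derivative exp (- oint (q t) xstar x) * (- q t x)) (at x)"
    by (auto intro!: derivative_eq_intros)
  moreover have "s t = (\<lambda>u. exp (- oint (q t) xstar u))"
    by (simp add: scale_density_def[abs_def] eq)
  ultimately show ?thesis by (simp add: mult.commute)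
qed

lemma s_pos: "s t x > 0" by (simp add: scale_density_def)

lemma s_cont: "t \<in> Theta \<Longrightarrow> continuous_on X (s t)"
  using s_deriv by (meson DERIV_continuous continuous_at_imp_continuous_on)

lemma S_deriv: assumes "t \<in> Theta" "x \<in> X" shows "DERIV (S t) x :> s t x"
  unfolding scale_measure_def[abs_def]
  by (rule ftc_oint[OF X_open X_ivl xstar s_cont[OF assms(1)] assms(2)])

end

locale dm = dm0 +
  assumes surj: "\<forall>t\<in>Theta. scale_measure mu sigma2 xstar t ` X = UNIV"
begin

lemma R_props:
  assumes t: "t \<in> Theta"
  shows "inj_on (S t) X" "\<And>y. R t y \<in> X" "\<And>y. S t (R t y) = y" "\<And>x. x \<in> X \<Longrightarrow> R t (S t x) = x"
    "\<And>y. DERIV (R t) y :> 1 / s t (R t y)"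
  using inverse_props[OF X_open X_ivl, of "S t" "s t", OF S_deriv[OF t] s_pos] surj t by auto

lemma R_cont: "t \<in> Theta \<Longrightarrow> continuous_on UNIV (R t)"
  using R_props(5) by (meson DERIV_continuous continuous_at_imp_continuous_on)

end


context dm begin


lemma char:
  assumes t: "t \<in> Theta" and W: "admissible_V X W" and y: "y \<in> W ` X"
  defines "U \<equiv> inv_into X W"
  defines "Ud \<equiv> \<lambda>y. 1 / deriv W (U y)"
  defines "Udd \<equiv> \<lambda>y. - deriv (deriv W) (U y) * Ud y / (deriv W (U y))^2"
  defines "h \<equiv> \<lambda>y. S t (U y)"
  defines "hD \<equiv> \<lambda>y. s t (U y) * Ud y"
  defines "hDD \<equiv> \<lambda>y. - q t (U y) * s t (U y) * (Ud y)^2 + s t (U y) * Udd y"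
  shows "DERIV h y :> hD y" "DERIV hD y :> hDD y" "hD y > 0"
    "sigma2_Y sigma2 X t W y = sigma2_bar mu sigma2 X xstar t (h y) / (hD y)^2"
    "sigma2_Y sigma2 X t W y > 0"
    "mu_Y mu sigma2 X t W y = - 1/2 * sigma2_Y sigma2 X t W y * hDD y / hD y"
proof -
  have C2W: "C2_on X W" and dpos: "\<And>x. x \<in> X \<Longrightarrow> deriv W x > 0"
    using W by (auto simp: admissible_V_def)
  note Wd = C2_facts(1)[OF C2W] and Wdd = C2_facts(2)[OF C2W]
  note IP = inverse_props[OF X_open X_ivl, of W "deriv W", OF Wd dpos]
  have Iopen: "open (W ` X)" using IP(1) .
  have Ux: "\<And>y. y \<in> W ` X \<Longrightarrow> U y \<in> X" using IP(4) unfolding U_def .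
  have Ud: "\<And>y. y \<in> W ` X \<Longrightarrow> DERIV U y :> Ud y" using IP(7) unfolding U_def Ud_def .
  have Udd: "DERIV Ud z :> Udd z" if z: "z \<in> W ` X" for z
  proof -
    have d1: "DERIV (\<lambda>y. deriv W (U y)) z :> deriv (deriv W) (U z) * Ud z"
      by (rule DERIV_chain2[OF Wdd[OF Ux[OF z]] Ud[OF z]])
    have nz: "deriv W (U z) \<noteq> 0" using dpos[OF Ux[OF z]] by simp
    show ?thesis unfolding Ud_def[abs_def]
      by (rule deriv_eqI[OF DERIV_divide[OF DERIV_const d1 nz]])
         (simp add: Udd_def Ud_def power2_eq_square)
  qed
  have dU: "deriv U y = Ud y" using Ud[OF y] by (rule DERIV_imp_deriv)
  have ddU: "deriv (deriv U) y = Udd y"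
  proof -
    have "DERIV (deriv U) y :> Udd y"
      by (rule has_field_derivative_transform_within_open[OF Udd[OF y] Iopen y])
         (use Ud DERIV_imp_deriv in metis)
    then show ?thesis by (rule DERIV_imp_deriv)
  qed
  have uy: "U y \<in> X" using Ux[OF y] .
  have pW: "deriv W (U y) > 0" using dpos[OF uy] .
  have sp: "sigma2 (U y) t > 0" using sig_pos[OF t uy] .
  have spos: "s t (U y) > 0" by (rule s_pos)
  show "DERIV h y :> hD y" unfolding h_def hD_def
    by (rule DERIV_chain2[OF S_deriv[OF t uy] Ud[OF y]])
  have ds: "DERIV (\<lambda>y. s t (U y)) y :> - q t (U y) * s t (U y) * Ud y"
    by (rule DERIV_chain2[OF s_deriv[OF t uy] Ud[OF y]])
  show "DERIV hD y :> hDD y" unfolding hD_def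
    by (rule deriv_eqI[OF DERIV_mult[OF ds Udd[OF y]]]) (simp add: hDD_def power2_eq_square)
  show "hD y > 0" using spos pW by (simp add: hD_def Ud_def)
  have RS: "R t (S t (U y)) = U y" using R_props(4)[OF t uy] .
  have ud0: "Ud y > 0" using pW by (simp add: Ud_def)
  have e1: "mu_Y mu sigma2 X t W y = mu (U y) t / Ud y - 1/2 * sigma2 (U y) t * Udd y / (Ud y)^3"
    unfolding mu_Y_def Let_def U_def[symmetric] dU ddU ..
  have e2: "sigma2_Y sigma2 X t W y = sigma2 (U y) t / (Ud y)^2"
    unfolding sigma2_Y_def Let_def U_def[symmetric] dU ..
  have e3: "sigma2_bar mu sigma2 X xstar t (h y) = (s t (U y))^2 * sigma2 (U y) t"
    unfolding sigma2_bar_def Let_def h_def RS ..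
  show "sigma2_Y sigma2 X t W y = sigma2_bar mu sigma2 X xstar t (h y) / (hD y)^2"
    unfolding e2 e3 hD_def using spos ud0 by (simp add: power_mult_distrib)
  show "sigma2_Y sigma2 X t W y > 0"
    unfolding e2 using sp ud0 by simp
  show "mu_Y mu sigma2 X t W y = - 1/2 * sigma2_Y sigma2 X t W y * hDD y / hD y"
    unfolding e1 e2 hDD_def hD_def qf_def
    by (rule alg1) (use sp spos ud0 in auto)
qed

end



context dm begin

definition "Udf W y = 1 / deriv W (inv_into X W y)"
definition "Uddf W y = - deriv (deriv W) (inv_into X W y) * Udf W y / (deriv W (inv_into X W y))^2"
definition "hf t W y = S t (inv_into X W y)"
definition "hDf t W y = s t (inv_into X W y) * Udf W y"
definition "hDDf t W y = - q t (inv_into X W y) * s t (inv_into X W y) * (Udf W y)^2 + s t (inv_into X W y) * Uddf W y"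

lemma char2:
  assumes t: "t \<in> Theta" and W: "admissible_V X W" and y: "y \<in> W ` X"
  shows "DERIV (hf t W) y :> hDf t W y" "DERIV (hDf t W) y :> hDDf t W y" "hDf t W y > 0"
    "sigma2_Y sigma2 X t W y = sigma2_bar mu sigma2 X xstar t (hf t W y) / (hDf t W y)^2"
    "sigma2_Y sigma2 X t W y > 0"
    "mu_Y mu sigma2 X t W y = - 1/2 * sigma2_Y sigma2 X t W y * hDDf t W y / hDf t W y"
proof -
  have e1: "hf t W = (\<lambda>y. S t (inv_into X W y))" by (simp add: hf_def[abs_def])
  have e2: "hDf t W = (\<lambda>y. s t (inv_into X W y) * (\<lambda>y. 1 / deriv W (inv_into X W y)) y)"
    by (simp add: hDf_def[abs_def] Udf_def[abs_def])
  have e3: "hDDf t W = (\<lambda>y. - q t (inv_into X W y) * s t (inv_into X W y) * ((\<lambda>y. 1 / deriv W (inv_into X W y)) y)^2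
     + s t (inv_into X W y) * (\<lambda>y. - deriv (deriv W) (inv_into X W y) * (\<lambda>y. 1 / deriv W (inv_into X W y)) y / (deriv W (inv_into X W y))^2) y)"
    by (simp add: hDDf_def[abs_def] Udf_def[abs_def] Uddf_def[abs_def])
  note C = char[OF t W y]
  show "DERIV (hf t W) y :> hDf t W y" unfolding e1 e2 by (rule C(1))
  show "DERIV (hDf t W) y :> hDDf t W y" unfolding e2 e3 by (rule C(2))
  show "hDf t W y > 0" unfolding e2 by (rule C(3))
  show "sigma2_Y sigma2 X t W y = sigma2_bar mu sigma2 X xstar t (hf t W y) / (hDf t W y)^2"
    unfolding e1 e2 by (rule C(4))
  show "sigma2_Y sigma2 X t W y > 0" by (rule C(5))
  show "mu_Y mu sigma2 X t W y = - 1/2 * sigma2_Y sigma2 X t W y * hDDf t W y / hDf t W y"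
    unfolding e2 e3 by (rule C(6))
qed

lemma W_props:
  assumes W: "admissible_V X W"
  shows "open (W ` X)" "is_interval (W ` X)" "inj_on W X"
    "\<And>y. y \<in> W ` X \<Longrightarrow> inv_into X W y \<in> X"
    "\<And>y. y \<in> W ` X \<Longrightarrow> W (inv_into X W y) = y"
    "\<And>x. x \<in> X \<Longrightarrow> inv_into X W (W x) = x"
proof -
  have C2W: "C2_on X W" and dpos: "\<And>x. x \<in> X \<Longrightarrow> deriv W x > 0"
    using W by (auto simp: admissible_V_def)
  note IP = inverse_props[OF X_open X_ivl, of W "deriv W", OF C2_facts(1)[OF C2W] dpos]
  show "open (W ` X)" "is_interval (W ` X)" "inj_on W X"
    "\<And>y. y \<in> W ` X \<Longrightarrow> inv_into X W y \<in> X"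
    "\<And>y. y \<in> W ` X \<Longrightarrow> W (inv_into X W y) = y"
    "\<And>x. x \<in> X \<Longrightarrow> inv_into X W (W x) = x" using IP by auto
qed

lemma alg2:
  fixes a b c d e :: real
  assumes "a / b^2 = c / d^2" "b \<noteq> 0" "d \<noteq> 0" "e = b / d"
  shows "a = e^2 * c"
proof -
  have a: "a = b^2 * (c / d^2)" using assms(1,2) by (simp add: field_simps)
  have "b^2 * (c / d^2) = (b / d)^2 * c" by (simp add: power_divide)
  then show ?thesis using a assms(4) by simp
qed

lemma dir2:
  assumes th: "th \<in> Theta" and c: "admissible_V X V"
    and nE: "\<not> (\<exists>eta1 eta2 th'. th' \<in> Theta \<and> eta1 > 0 \<and> (eta1 \<noteq> 1 \<or> eta2 \<noteq> 0 \<or> th' \<noteq> th) \<and>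
         (\<forall>xb \<in> S th ` X.
            sigma2_bar mu sigma2 X xstar th' xb
              = sigma2_bar mu sigma2 X xstar th (eta1 * xb + eta2) / eta1\<^sup>2))"
  shows "identified mu sigma2 Theta X (th, V)"
  unfolding identified_def
proof (intro allI impI, elim conjE)
  fix th' V' assume th': "th' \<in> Theta" and c': "admissible_V X V'"
    and oe: "obs_equiv mu sigma2 X (th, V) (th', V')"
  define I where "I = V ` X"
  have oe': "V ` X = V' ` X \<and> (\<forall>y\<in>V ` X. mu_Y mu sigma2 X th V y = mu_Y mu sigma2 X th' V' y
       \<and> sigma2_Y sigma2 X th V y = sigma2_Y sigma2 X th' V' y)"
    using oe unfolding obs_equiv_def prod.case .
  have II: "V' ` X = I" using oe' I_def by simp
  have eqs: "\<And>y. y \<in> I \<Longrightarrow> mu_Y mu sigma2 X th V y = mu_Y mu sigma2 X th' V' y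
       \<and> sigma2_Y sigma2 X th V y = sigma2_Y sigma2 X th' V' y"
    using oe' I_def by blast
  have yI': "y \<in> V' ` X" if "y \<in> I" for y using that II by simp
  have yI: "y \<in> V ` X" if "y \<in> I" for y using that I_def by simp
  note C1 = char2[OF th c yI] and C2 = char2[OF th' c' yI']
  have Iopen: "open I" and Iivl: "is_interval I" using W_props[OF c] I_def by auto
  have Icvx: "convex I" using Iivl is_interval_convex_1 by blast
  have ratio: "hDDf th V y * hDf th' V' y = hDf th V y * hDDf th' V' y" if y: "y \<in> I" for y
  proof -
    have "mu_Y mu sigma2 X th V y = mu_Y mu sigma2 X th' V' y"
      "sigma2_Y sigma2 X th V y = sigma2_Y sigma2 X th' V' y" using eqs[OF y] by auto
    then have "- 1/2 * sigma2_Y sigma2 X th V y * hDDf th V y / hDf th V y =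
               - 1/2 * sigma2_Y sigma2 X th V y * hDDf th' V' y / hDf th' V' y"
      using C1(6)[OF y] C2(6)[OF y] by simp
    then show ?thesis using C1(3,5)[OF y] C2(3)[OF y] by (simp add: field_simps)
  qed
  have "\<exists>a. \<forall>y\<in>I. hDf th' V' y / hDf th V y = a"
  proof (rule has_field_derivative_zero_constant[OF Icvx])
    fix y assume y: "y \<in> I"
    have "DERIV (\<lambda>y. hDf th' V' y / hDf th V y) y :>
        (hDDf th' V' y * hDf th V y - hDf th' V' y * hDDf th V y) / (hDf th V y * hDf th V y)"
      using C1(2,3)[OF y] C2(2)[OF y] by (intro DERIV_divide) auto
    then have "DERIV (\<lambda>y. hDf th' V' y / hDf th V y) y :> 0"
      using ratio[OF y] by (simp add: mult.commute)
    then show "((\<lambda>y. hDf th' V' y / hDf th V y) has_field_derivative 0) (at y within I)"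
      by (rule has_field_derivative_at_within)
  qed
  then obtain a where a: "\<And>y. y \<in> I \<Longrightarrow> hDf th' V' y / hDf th V y = a" by blast
  have xsI: "V xstar \<in> I" using xstar I_def by simp
  have apos: "a > 0" using a[OF xsI] C1(3)[OF xsI] C2(3)[OF xsI[unfolded I_def, folded I_def]]
    by (metis divide_pos_pos)
  have hDa: "hDf th' V' y = a * hDf th V y" if "y \<in> I" for y
    using a[OF that] C1(3)[OF that] by (simp add: field_simps)
  have "\<exists>b. \<forall>y\<in>I. hf th' V' y - a * hf th V y = b"
  proof (rule has_field_derivative_zero_constant[OF Icvx])
    fix y assume y: "y \<in> I"
    have "DERIV (\<lambda>y. hf th' V' y - a * hf th V y) y :> hDf th' V' y - a * hDf th V y"
      using C1(1)[OF y] C2(1)[OF y] by (auto intro!: derivative_eq_intros)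
    then have "DERIV (\<lambda>y. hf th' V' y - a * hf th V y) y :> 0" using hDa[OF y] by simp
    then show "((\<lambda>y. hf th' V' y - a * hf th V y) has_field_derivative 0) (at y within I)"
      by (rule has_field_derivative_at_within)
  qed
  then obtain b where b: "\<And>y. y \<in> I \<Longrightarrow> hf th' V' y = a * hf th V y + b"
    by (metis add.commute diff_eq_eq)
  show "th' = fst (th, V) \<and> (\<forall>x\<in>X. V' x = snd (th, V) x)"
  proof (cases "a = 1 \<and> b = 0 \<and> th' = th")
    case True
    have "V' x = V x" if x: "x \<in> X" for x
    proof -
      have y: "V x \<in> I" using x I_def by simp
      have u1: "inv_into X V (V x) = x" using W_props(6)[OF c x] .
      have u2: "inv_into X V' (V x) \<in> X" using W_props(4)[OF c' yI'[OF y]] .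
      have "S th (inv_into X V' (V x)) = S th x"
        using b[OF y] True u1 by (simp add: hf_def)
      then have "inv_into X V' (V x) = x"
        using R_props(1)[OF th] u2 x by (meson inj_onD)
      then show ?thesis using W_props(5)[OF c' yI'[OF y]] by simp
    qed
    then show ?thesis using True by simp
  next
    case False
    have "\<exists>eta1 eta2 th'. th' \<in> Theta \<and> eta1 > 0 \<and> (eta1 \<noteq> 1 \<or> eta2 \<noteq> 0 \<or> th' \<noteq> th) \<and>
         (\<forall>xb \<in> S th ` X.
            sigma2_bar mu sigma2 X xstar th' xb
              = sigma2_bar mu sigma2 X xstar th (eta1 * xb + eta2) / eta1\<^sup>2)"
    proof (intro exI conjI ballI)
      show "th' \<in> Theta" by (rule th')
      show "1 / a > 0" using apos by simp
      show "1 / a \<noteq> 1 \<or> - b / a \<noteq> 0 \<or> th' \<noteq> th" using False apos by auto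
      fix xb assume "xb \<in> S th ` X"
      have "xb \<in> S th' ` X" using surj th' by auto
      then obtain x' where x': "x' \<in> X" "xb = S th' x'" by auto
      define y where "y = V' x'"
      have y: "y \<in> I" using x' II y_def by auto
      have u2: "inv_into X V' y = x'" using W_props(6)[OF c' x'(1)] y_def by simp
      have h2: "hf th' V' y = xb" using u2 x' by (simp add: hf_def)
      have h1: "hf th V y = 1 / a * xb + - b / a"
        using b[OF y] h2 apos by (simp add: field_simps)
      have "sigma2_bar mu sigma2 X xstar th' (hf th' V' y) / (hDf th' V' y)^2
          = sigma2_bar mu sigma2 X xstar th (hf th V y) / (hDf th V y)^2"
        using C1(4)[OF y] C2(4)[OF y] eqs[OF y] by simp
      then have "sigma2_bar mu sigma2 X xstar th' (hf th' V' y) = a^2 * sigma2_bar mu sigma2 X xstar th (hf th V y)"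
        by (rule alg2) (use C1(3)[OF y] C2(3)[OF y] a[OF y] in auto)
      then show "sigma2_bar mu sigma2 X xstar th' xb
              = sigma2_bar mu sigma2 X xstar th (1 / a * xb + - b / a) / (1 / a)\<^sup>2"
        using h1 h2 apos by (simp add: field_simps)
    qed
    then show ?thesis using nE by blast
  qed
qed

end


context dm begin
lemma dir1:
  assumes th: "th \<in> Theta" and c: "admissible_V X V"
    and idf: "identified mu sigma2 Theta X (th, V)"
    and th': "th' \<in> Theta" and e1: "eta1 > 0" and nt: "eta1 \<noteq> 1 \<or> eta2 \<noteq> 0 \<or> th' \<noteq> th"
    and rel: "\<forall>xb \<in> S th ` X. sigma2_bar mu sigma2 X xstar th' xb
              = sigma2_bar mu sigma2 X xstar th (eta1 * xb + eta2) / eta1\<^sup>2"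
  shows False
proof -
  define L where "L = (\<lambda>x. eta1 * S th' x + eta2)"
  define T where "T = (\<lambda>x. R th (L x))"
  define Ti where "Ti = (\<lambda>z. R th' ((S th z - eta2) / eta1))"
  define V' where "V' = (\<lambda>x. V (T x))"
  have C2V: "C2_on X V" and dpos: "\<And>x. x \<in> X \<Longrightarrow> deriv V x > 0"
    using c by (auto simp: admissible_V_def)
  have TX: "T x \<in> X" for x unfolding T_def using R_props(2)[OF th] .
  have TiX: "Ti z \<in> X" for z unfolding Ti_def using R_props(2)[OF th'] .
  have STx: "S th (T x) = L x" for x unfolding T_def using R_props(3)[OF th] .
  have T_Ti: "T (Ti z) = z" if "z \<in> X" for z
  proof -
    have "L (Ti z) = S th z" unfolding L_def Ti_def using R_props(3)[OF th'] e1 by simp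
    then show ?thesis unfolding T_def using R_props(4)[OF th that] by simp
  qed
  have Ti_T: "Ti (T x) = x" if "x \<in> X" for x
  proof -
    have "(S th (T x) - eta2) / eta1 = S th' x" using STx e1 by (simp add: L_def)
    then show ?thesis unfolding Ti_def using R_props(4)[OF th' that] by simp
  qed
  define Td where "Td = (\<lambda>x. eta1 * s th' x / s th (T x))"
  define Tdd where "Tdd = (\<lambda>x. (eta1 * (- q th' x * s th' x) * s th (T x) - eta1 * s th' x * (- q th (T x) * s th (T x) * Td x)) / (s th (T x) * s th (T x)))"
  define Vd where "Vd = (\<lambda>x. deriv V (T x) * Td x)"
  define Vdd where "Vdd = (\<lambda>x. deriv (deriv V) (T x) * Td x * Td x + deriv V (T x) * Tdd x)"
  have dT: "DERIV T x :> Td x" if x: "x \<in> X" for x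
  proof -
    have dL: "DERIV L x :> eta1 * s th' x"
      unfolding L_def using S_deriv[OF th' x] by (auto intro!: derivative_eq_intros)
    show ?thesis unfolding T_def
      by (rule deriv_eqI[OF DERIV_chain2[OF R_props(5)[OF th] dL]]) (simp add: Td_def T_def)
  qed
  have ds': "DERIV (s th') x :> - q th' x * s th' x" if "x \<in> X" for x using s_deriv[OF th' that] .
  have dsT: "DERIV (\<lambda>x. s th (T x)) x :> - q th (T x) * s th (T x) * Td x" if "x \<in> X" for x
    by (rule DERIV_chain2[OF s_deriv[OF th TX] dT[OF that]])
  have dTd: "DERIV Td x :> Tdd x" if x: "x \<in> X" for x
  proof -
    have "DERIV (\<lambda>x. eta1 * s th' x) x :> eta1 * (- q th' x * s th' x)"
      by (rule DERIV_cmult[OF ds'[OF x]])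
    from DERIV_divide[OF this dsT[OF x]] show ?thesis
      unfolding Td_def Tdd_def by (simp add: s_pos less_imp_neq[OF s_pos, symmetric])
  qed
  have dV': "DERIV V' x :> Vd x" if x: "x \<in> X" for x
    unfolding V'_def Vd_def by (rule DERIV_chain2[OF C2_facts(1)[OF C2V TX] dT[OF x]])
  have dVd: "DERIV Vd x :> Vdd x" if x: "x \<in> X" for x
  proof -
    have "DERIV (\<lambda>x. deriv V (T x)) x :> deriv (deriv V) (T x) * Td x"
      by (rule DERIV_chain2[OF C2_facts(2)[OF C2V TX] dT[OF x]])
    from DERIV_mult[OF this dTd[OF x]] show ?thesis unfolding Vd_def Vdd_def
      by (rule deriv_eqI) (simp add: algebra_simps)
  qed
  have cVdd: "isCont Vdd x" if x: "x \<in> X" for x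
  proof -
    have cT: "isCont T x" using dT[OF x] by (rule DERIV_isCont)
    have cs': "isCont (s th') x" using ds'[OF x] by (rule DERIV_isCont)
    have cq': "isCont (q th') x"
      using q_cont[OF th'] X_open x continuous_on_eq_continuous_at by blast
    have cqT: "isCont (\<lambda>x. q th (T x)) x"
      using q_cont[OF th] X_open TX continuous_on_eq_continuous_at cT by (blast intro: isCont_o2)
    have csT: "isCont (\<lambda>x. s th (T x)) x" using dsT[OF x] by (rule DERIV_isCont)
    have cdV: "isCont (\<lambda>x. deriv V (T x)) x"
      using cT DERIV_isCont[OF C2_facts(2)[OF C2V TX]] isCont_o2 by blast
    have cddV0: "continuous_on X (deriv (deriv V))" using C2V by (simp add: C2_on_def)
    have cddV: "isCont (\<lambda>x. deriv (deriv V) (T x)) x"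
      using cddV0 X_open TX continuous_on_eq_continuous_at cT by (blast intro: isCont_o2)
    have nz: "s th (T x) \<noteq> 0" using s_pos less_imp_neq by (metis)
    have cTd: "isCont Td x" unfolding Td_def using cs' csT nz by (intro continuous_intros) auto
    have cTdd: "isCont Tdd x" unfolding Tdd_def using cs' csT nz cq' cqT cTd
      by (intro continuous_intros) auto
    show ?thesis unfolding Vdd_def using cddV cdV cTd cTdd by (intro continuous_intros) auto
  qed
  have Tdpos: "Td x > 0" if "x \<in> X" for x unfolding Td_def using e1 s_pos by simp
  have Vdpos: "Vd x > 0" if "x \<in> X" for x unfolding Vd_def using dpos[OF TX] Tdpos[OF that] by simp
  have dV'eq: "deriv V' x = Vd x" if "x \<in> X" for x using dV'[OF that] by (rule DERIV_imp_deriv)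
  have ddV': "DERIV (deriv V') x :> Vdd x" if x: "x \<in> X" for x
    by (rule has_field_derivative_transform_within_open[OF dVd[OF x] X_open x]) (simp add: dV'eq)
  have adm: "admissible_V X V'"
    unfolding admissible_V_def C2_on_def
  proof (intro conjI ballI)
    show "strict_mono_on X V'" by (rule pos_deriv_strict_mono[OF X_ivl dV' Vdpos])
    fix x assume x: "x \<in> X"
    show "V' field_differentiable at x" using dV'[OF x] field_differentiable_def by blast
    show "deriv V' field_differentiable at x" using ddV'[OF x] field_differentiable_def by blast
    show "deriv V' x > 0" using dV'eq[OF x] Vdpos[OF x] by simp
  next
    have "continuous_on X Vdd" using cVdd by (simp add: continuous_at_imp_continuous_on)
    then show "continuous_on X (deriv (deriv V'))"
      by (rule continuous_on_eq) (metis ddV' DERIV_imp_deriv)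
  qed
  define I where "I = V ` X"
  have Iopen: "open I" using W_props(1)[OF c] I_def by simp
  have img: "V' ` X = I"
  proof
    show "V' ` X \<subseteq> I" unfolding I_def V'_def using TX by auto
    show "I \<subseteq> V' ` X"
    proof
      fix y assume "y \<in> I"
      then obtain z where z: "z \<in> X" "y = V z" unfolding I_def by auto
      then have "y = V' (Ti z)" unfolding V'_def using T_Ti by simp
      then show "y \<in> V' ` X" using TiX by auto
    qed
  qed
  have yI: "y \<in> V ` X" if "y \<in> I" for y using that I_def by simp
  have yI': "y \<in> V' ` X" if "y \<in> I" for y using that img by simp
  have heq: "hf th' V' y = (hf th V y - eta2) / eta1" if y: "y \<in> I" for y
  proof -
    define u where "u = inv_into X V y"
    have u: "u \<in> X" "V u = y" using W_props(4,5)[OF c yI[OF y]] u_def by auto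
    have "V' (Ti u) = y" unfolding V'_def using T_Ti[OF u(1)] u(2) by simp
    then have "inv_into X V' y = Ti u" using W_props(6)[OF adm TiX[of u]] by metis
    then show ?thesis unfolding hf_def u_def[symmetric] Ti_def using R_props(3)[OF th'] by simp
  qed
  note C1 = char2[OF th c yI] and C2 = char2[OF th' adm yI']
  have hDeq: "hDf th' V' y = hDf th V y / eta1" if y: "y \<in> I" for y
  proof -
    have "DERIV (\<lambda>y. (hf th V y - eta2) / eta1) y :> hDf th V y / eta1"
      using C1(1)[OF y] e1 by (auto intro!: derivative_eq_intros)
    then have "DERIV (hf th' V') y :> hDf th V y / eta1"
      by (rule has_field_derivative_transform_within_open[OF _ Iopen y]) (simp add: heq)
    then show ?thesis using C2(1)[OF y] DERIV_unique by blast
  qed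
  have hDDeq: "hDDf th' V' y = hDDf th V y / eta1" if y: "y \<in> I" for y
  proof -
    have "DERIV (\<lambda>y. hDf th V y / eta1) y :> hDDf th V y / eta1"
      using C1(2)[OF y] e1 by (auto intro!: derivative_eq_intros)
    then have "DERIV (hDf th' V') y :> hDDf th V y / eta1"
      by (rule has_field_derivative_transform_within_open[OF _ Iopen y]) (simp add: hDeq)
    then show ?thesis using C2(2)[OF y] DERIV_unique by blast
  qed
  have sig: "sigma2_Y sigma2 X th' V' y = sigma2_Y sigma2 X th V y" if y: "y \<in> I" for y
  proof -
    have "hf th' V' y \<in> S th ` X" using surj th by auto
    then have "sigma2_bar mu sigma2 X xstar th' (hf th' V' y)
       = sigma2_bar mu sigma2 X xstar th (eta1 * hf th' V' y + eta2) / eta1\<^sup>2" using rel by blast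
    also have "eta1 * hf th' V' y + eta2 = hf th V y" using heq[OF y] e1 by simp
    finally show ?thesis unfolding C1(4)[OF y] C2(4)[OF y] hDeq[OF y]
      using e1 by (simp add: power_divide)
  qed
  have muq: "mu_Y mu sigma2 X th' V' y = mu_Y mu sigma2 X th V y" if y: "y \<in> I" for y
    unfolding C1(6)[OF y] C2(6)[OF y] sig[OF y] hDDeq[OF y] hDeq[OF y] using e1 by simp
  have oe: "obs_equiv mu sigma2 X (th, V) (th', V')"
    unfolding obs_equiv_def using img sig muq I_def by auto
  have res: "th' = th" "\<And>x. x \<in> X \<Longrightarrow> V' x = V x"
    using idf th' adm oe unfolding identified_def by auto
  have AA: "S th x = eta1 * S th x + eta2" if x: "x \<in> X" for x
  proof -
    have "V (T x) = V x" using res(2)[OF x] by (simp add: V'_def)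
    then have "T x = x" using W_props(3)[OF c] TX x by (meson inj_onD)
    then show ?thesis using STx[of x] res(1) by (simp add: L_def)
  qed
  obtain x0 where x0: "x0 \<in> X" "S th x0 = 0" using surj th by (metis UNIV_I imageE)
  obtain x1 where x1: "x1 \<in> X" "S th x1 = 1" using surj th by (metis UNIV_I imageE)
  have "eta2 = 0" using AA[OF x0(1)] x0(2) by simp
  moreover have "eta1 = 1" using AA[OF x1(1)] x1(2) \<open>eta2 = 0\<close> by simp
  ultimately have "eta2 = 0" "eta1 = 1" by auto
  then show False using nt res(1) by simp
qed
end

theorem theorem5:
  fixes mu sigma2 :: "real \<Rightarrow> 'p \<Rightarrow> real"
    and Theta :: "'p set" and th :: 'p
    and xl xr :: ereal and xstar :: real
    and V :: "real \<Rightarrow> real"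
    and X :: "real set"
  defines "X \<equiv> {x. xl < ereal x \<and> ereal x < xr}"
  assumes interval: "xl < xr" and xstar: "xstar \<in> X"
    and a: "\<forall>t\<in>Theta. C2_on X (\<lambda>x. mu x t) \<and> C2_on X (\<lambda>x. sigma2 x t)
                     \<and> (\<forall>x\<in>X. sigma2 x t > 0)"
    and b: "\<forall>t\<in>Theta.
              filterlim (scale_measure mu sigma2 xstar t) at_bot (left_end xl)
            \<and> filterlim (scale_measure mu sigma2 xstar t) at_top (right_end xr)"
    and th: "th \<in> Theta"
    and c: "admissible_V X V"
  shows "identified mu sigma2 Theta X (th, V) \<longleftrightarrow>
    \<not> (\<exists>eta1 eta2 th'. th' \<in> Theta \<and> eta1 > 0 \<and> (eta1 \<noteq> 1 \<or> eta2 \<noteq> 0 \<or> th' \<noteq> th) \<and>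
         (\<forall>xb \<in> scale_measure mu sigma2 xstar th ` X.
            sigma2_bar mu sigma2 X xstar th' xb
              = sigma2_bar mu sigma2 X xstar th (eta1 * xb + eta2) / eta1\<^sup>2))"
proof -
  have X_eq: "X = {x. xl < ereal x \<and> ereal x < xr}" by (simp add: X_def)
  note XP = X_props[OF X_eq]
  interpret d0: dm0 mu sigma2 Theta X xstar
    using XP xstar a by unfold_locales auto
  have surj: "\<forall>t\<in>Theta. scale_measure mu sigma2 xstar t ` X = UNIV"
  proof
    fix t assume t: "t \<in> Theta"
    have "continuous_on X (scale_measure mu sigma2 xstar t)"
      using d0.S_deriv[OF t] by (meson DERIV_continuous continuous_at_imp_continuous_on)
    then show "scale_measure mu sigma2 xstar t ` X = UNIV"
      using surj_gen[OF X_eq xstar] b t by blast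
  qed
  interpret d: dm mu sigma2 Theta X xstar
    using XP xstar a surj by unfold_locales auto
  show ?thesis
  proof
    assume idf: "identified mu sigma2 Theta X (th, V)"
    show "\<not> (\<exists>eta1 eta2 th'. th' \<in> Theta \<and> eta1 > 0 \<and> (eta1 \<noteq> 1 \<or> eta2 \<noteq> 0 \<or> th' \<noteq> th) \<and>
         (\<forall>xb \<in> scale_measure mu sigma2 xstar th ` X.
            sigma2_bar mu sigma2 X xstar th' xb
              = sigma2_bar mu sigma2 X xstar th (eta1 * xb + eta2) / eta1\<^sup>2))"
    proof
      assume "\<exists>eta1 eta2 th'. th' \<in> Theta \<and> eta1 > 0 \<and> (eta1 \<noteq> 1 \<or> eta2 \<noteq> 0 \<or> th' \<noteq> th) \<and>
         (\<forall>xb \<in> scale_measure mu sigma2 xstar th ` X.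
            sigma2_bar mu sigma2 X xstar th' xb
              = sigma2_bar mu sigma2 X xstar th (eta1 * xb + eta2) / eta1\<^sup>2)"
      then obtain eta1 eta2 th' where h: "th' \<in> Theta" "eta1 > 0" "eta1 \<noteq> 1 \<or> eta2 \<noteq> 0 \<or> th' \<noteq> th"
         "\<forall>xb \<in> scale_measure mu sigma2 xstar th ` X.
            sigma2_bar mu sigma2 X xstar th' xb
              = sigma2_bar mu sigma2 X xstar th (eta1 * xb + eta2) / eta1\<^sup>2" by blast
      show False by (rule d.dir1[OF th c idf h])
    qed
  next
    assume "\<not> (\<exists>eta1 eta2 th'. th' \<in> Theta \<and> eta1 > 0 \<and> (eta1 \<noteq> 1 \<or> eta2 \<noteq> 0 \<or> th' \<noteq> th) \<and>
         (\<forall>xb \<in> scale_measure mu sigma2 xstar th ` X.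
            sigma2_bar mu sigma2 X xstar th' xb
              = sigma2_bar mu sigma2 X xstar th (eta1 * xb + eta2) / eta1\<^sup>2))"
    then show "identified mu sigma2 Theta X (th, V)" by (rule d.dir2[OF th c])
  qed
qed

end
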